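(* Let $G$ be a $k$-DCFG in Chomsky normal form, let $T$ be a derivation tree of $G$, and let $(v,v')$ be a pump in $T$. Let $T'$ be the tree obtained from $T$ by collapsing this pump, i.e., replacing the subtree rooted at $v$ by the subtree rooted at $v'$ (so the nodes of $T'$ are nodes of $T$). If two nodes $v_1,v_2$ form a pump in $T'$, then $v_1,v_2$ also form a pump in $T$.
   Context: Let $\Sigma$ be a finite alphabet and $1\notin\Sigma$ a separator; $\Sigma_1=\Sigma\cup\{1\}$. A $k$-DCFG $G=\langle N,\Sigma,P,S\rangle$ has a finite set $N$ of nonterminals, each with a rank in $\{0,\dots,k\}$, start symbol $S$ of rank $0$, and rules; it is in Chomsky normal form if every rule has the form $A\to B\cdot C$ or $A\to B\odot_j C$ with $j\le k$, $B,C\in N\setminus\{S\}$ (subject to the rank constraints $\mathrm{rk}(A)=\mathrm{rk}(B)+\mathrm{rk}(C)$ for $\cdot$, $\mathrm{rk}(A)=\mathrm{rk}(B)+\mathrm{rk}(C)-1$ and $\mathrm{rk}(B)\ge j$ for $\odot_j$, all ranks $\le k$), $A\to a$ with $a\in\Sigma_1$ (rank of $a$ is $1$ if $a=1$, else $0$), or $S\to\epsilon$. A derivation tree is a finite rooted ordered tree with nodes labeled by nonterminals in which each internal node labeled $A$ has exactly two children labeled $B,C$ with $A\to B\cdot C$ or $A\to B\odot_j C$ a rule of $G$, and each leaf labeled $A$ corresponds to a rule $A\to a$ or $S\to\epsilon$. The rank of a node is the rank of its label. A node $v'$ is a direct descendant of a node $v$ if $v'$ is a proper descendant of $v$ and all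 nodes on the path from $v$ to $v'$ (inclusive) have the same rank. A pump is a pair $(v,v')$ of internal nodes with the same nonterminal label such that $v'$ is a direct descendant of $v$. *)

theory Defs
  imports Main "HOL-Library.Sublist"
begin

text \<open>Rules of a k-DCFG in Chomsky normal form.  Terminals are \<open>'a option\<close>,
  where \<open>None\<close> is the separator 1 and \<open>Some a\<close> is a letter a of Sigma.\<close>
datatype ('n, 'a) rule =
    Concat 'n 'n 'n
  | Wrap 'n nat 'n 'n        (* A -> B (.)_j C *)
  | Term 'n "'a option"
  | Eps 'n

definition cnf_dcfg ::
  "nat \<Rightarrow> 'n set \<Rightarrow> ('n \<Rightarrow> nat) \<Rightarrow> 'n \<Rightarrow> ('n, 'a) rule set \<Rightarrow> bool" where
  "cnf_dcfg k N rk S P \<longleftrightarrow>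
     finite N \<and> finite P \<and> S \<in> N \<and> rk S = 0 \<and> (\<forall>A\<in>N. rk A \<le> k) \<and>
     (\<forall>r\<in>P. case r of
        Concat A B C \<Rightarrow> A \<in> N \<and> B \<in> N - {S} \<and> C \<in> N - {S} \<and> rk A = rk B + rk C
      | Wrap A j B C \<Rightarrow> A \<in> N \<and> B \<in> N - {S} \<and> C \<in> N - {S} \<and> j \<le> k \<and>
                        rk A + 1 = rk B + rk C \<and> j \<le> rk B
      | Term A a \<Rightarrow> A \<in> N \<and> rk A = (if a = None then 1 else 0)
      | Eps A \<Rightarrow> A = S)"

datatype 'n tree = Leaf 'n | Node 'n "'n tree" "'n tree"

fun root :: "'n tree \<Rightarrow> 'n" where
  "root (Leaf A) = A"
| "root (Node A l r) = A"

fun deriv_tree :: "('n, 'a) rule set \<Rightarrow> 'n \<Rightarrow> 'n tree \<Rightarrow> bool" where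
  "deriv_tree P S (Leaf A) \<longleftrightarrow> (\<exists>a. Term A a \<in> P) \<or> (A = S \<and> Eps S \<in> P)"
| "deriv_tree P S (Node A l r) \<longleftrightarrow>
     (Concat A (root l) (root r) \<in> P \<or> (\<exists>j. Wrap A j (root l) (root r) \<in> P)) \<and>
     deriv_tree P S l \<and> deriv_tree P S r"

text \<open>Nodes are addressed by positions: lists of directions (False = left child,
  True = right child) from the root.\<close>
fun subt :: "'n tree \<Rightarrow> bool list \<Rightarrow> 'n tree option" where
  "subt t [] = Some t"
| "subt (Leaf A) (d # p) = None"
| "subt (Node A l r) (d # p) = subt (if d then r else l) p"

definition is_node :: "'n tree \<Rightarrow> bool list \<Rightarrow> bool" where
  "is_node t p \<longleftrightarrow> subt t p \<noteq> None"

definition is_internal :: "'n tree \<Rightarrow> bool list \<Rightarrow> bool" where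
  "is_internal t p \<longleftrightarrow> (\<exists>A l r. subt t p = Some (Node A l r))"

definition label :: "'n tree \<Rightarrow> bool list \<Rightarrow> 'n" where
  "label t p = root (the (subt t p))"

definition direct_desc :: "('n \<Rightarrow> nat) \<Rightarrow> 'n tree \<Rightarrow> bool list \<Rightarrow> bool list \<Rightarrow> bool" where
  "direct_desc rk t v v' \<longleftrightarrow> is_node t v' \<and> strict_prefix v v' \<and>
     (\<forall>u. prefix v u \<and> prefix u v' \<longrightarrow> rk (label t u) = rk (label t v))"

definition pump :: "('n \<Rightarrow> nat) \<Rightarrow> 'n tree \<Rightarrow> bool list \<Rightarrow> bool list \<Rightarrow> bool" where
  "pump rk t v v' \<longleftrightarrow> is_internal t v \<and> is_internal t v' \<and>
     label t v = label t v' \<and> direct_desc rk t v v'"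

fun replace :: "'n tree \<Rightarrow> bool list \<Rightarrow> 'n tree \<Rightarrow> 'n tree" where
  "replace t [] s = s"
| "replace (Leaf A) (d # p) s = Leaf A"
| "replace (Node A l r) (d # p) s =
     (if d then Node A l (replace r p s) else Node A (replace l p s) r)"

definition collapse :: "'n tree \<Rightarrow> bool list \<Rightarrow> bool list \<Rightarrow> 'n tree" where
  "collapse t v v' = replace t v (the (subt t v'))"

text \<open>The node of T corresponding to position p of the collapsed tree.\<close>
definition orig_pos :: "bool list \<Rightarrow> bool list \<Rightarrow> bool list \<Rightarrow> bool list" where
  "orig_pos v v' p = (if prefix v p then v' @ drop (length v) p else p)"

end

theory Submission
  imports Defs
begin

lemma subt_append: "subt t (p@q) = Option.bind (subt t p) (\<lambda>t'. subt t' q)"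
proof (induction p arbitrary: t)
  case (Cons a p) then show ?case by (cases t) auto
qed simp

lemma node_prefix: "is_node t (p@q) \<Longrightarrow> is_node t p"
  by (cases "subt t p") (auto simp: is_node_def subt_append)

lemma node_prefix': "is_node t q \<Longrightarrow> prefix p q \<Longrightarrow> is_node t p"
  by (auto simp: prefix_def intro: node_prefix)

lemma replace_prefix: "is_node t v \<Longrightarrow> subt (replace t v s) (v@x) = subt s x"
  by (induction t v s rule: replace.induct) (auto simp: is_node_def)

lemma replace_incomp: "\<not> prefix v p \<Longrightarrow> \<not> prefix p v \<Longrightarrow> subt (replace t v s) p = subt t p"
proof (induction t v s arbitrary: p rule: replace.induct)
  case (3 A l r d v s)
  then show ?case by (cases p) auto
qed auto

lemma replace_strict: "is_node t v \<Longrightarrow> strict_prefix p v \<Longrightarrow>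
  \<exists>A l r l' r'. subt t p = Some (Node A l r) \<and> subt (replace t v s) p = Some (Node A l' r')"
proof (induction t v s arbitrary: p rule: replace.induct)
  case (2 A d v s)
  then show ?case by (simp add: is_node_def)
next
  case (3 A l r d v s)
  show ?case
  proof (cases p)
    case Nil then show ?thesis by auto
  next
    case (Cons e p')
    with 3 have "e = d" "strict_prefix p' v" by auto
    with 3 Cons show ?thesis by (auto simp: is_node_def)
  qed
qed auto

lemma collapse_node:
  assumes "is_node T v" "subt T v' = Some s" "root s = label T v" "is_node (replace T v s) p"
  shows "is_node T (orig_pos v v' p) \<and> label (replace T v s) p = label T (orig_pos v v' p)
    \<and> (is_internal (replace T v s) p \<longleftrightarrow> is_internal T (orig_pos v v' p))"
proof (cases "prefix v p")
  case True
  then obtain x where p: "p = v @ x" by (auto simp: prefix_def)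
  have "subt (replace T v s) p = subt T (v' @ x)"
    using replace_prefix[OF assms(1)] assms(2) p by (simp add: subt_append)
  moreover have "orig_pos v v' p = v' @ x" using p by (simp add: orig_pos_def)
  ultimately show ?thesis using assms(4)
    by (simp add: is_node_def label_def is_internal_def)
next
  case False
  hence o: "orig_pos v v' p = p" by (simp add: orig_pos_def)
  show ?thesis
  proof (cases "prefix p v")
    case True
    with False have "strict_prefix p v" by (auto simp: strict_prefix_def)
    from replace_strict[OF assms(1) this, of s] obtain A l r l' r' where
      "subt T p = Some (Node A l r)" "subt (replace T v s) p = Some (Node A l' r')" by blast
    then show ?thesis using o by (simp add: is_node_def label_def is_internal_def)
  next
    case False2: False
    show ?thesis using replace_incomp[OF False False2, of T s] o assms(4)
      by (simp add: is_node_def label_def is_internal_def)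
  qed
qed

theorem lemma7:
  fixes k :: nat and N :: "'n set" and rk :: "'n \<Rightarrow> nat" and S :: 'n
    and P :: "('n, 'a) rule set" and T :: "'n tree"
    and v v' v1 v2 :: "bool list"
  assumes "cnf_dcfg k N rk S P"
    and "deriv_tree P S T"
    and "pump rk T v v'"
    and "pump rk (collapse T v v') v1 v2"
  shows "pump rk T (orig_pos v v' v1) (orig_pos v v' v2)"
proof -
  define s where "s = the (subt T v')"
  define T' where "T' = replace T v s"
  have pT: "is_internal T v" "is_internal T v'" "label T v = label T v'" "is_node T v'"
    "strict_prefix v v'" and DT0: "\<forall>u. prefix v u \<and> prefix u v' \<longrightarrow> rk (label T u) = rk (label T v)"
    using assms(3) unfolding pump_def direct_desc_def by blast+
  have DT: "\<And>u. prefix v u \<Longrightarrow> prefix u v' \<Longrightarrow> rk (label T u) = rk (label T v)"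
    using DT0 by blast
  have sv': "subt T v' = Some s" using pT(4) unfolding s_def is_node_def by auto
  have nv: "is_node T v" using pT(1) unfolding is_node_def is_internal_def by auto
  have rs: "root s = label T v" using sv' pT(3) by (simp add: label_def)
  have cT: "collapse T v v' = T'" unfolding T'_def collapse_def s_def ..
  have pT': "is_internal T' v1" "is_internal T' v2" "label T' v1 = label T' v2" "is_node T' v2"
    "strict_prefix v1 v2" and DT0': "\<forall>u. prefix v1 u \<and> prefix u v2 \<longrightarrow> rk (label T' u) = rk (label T' v1)"
    using assms(4) unfolding cT pump_def direct_desc_def by blast+
  have DT': "\<And>u. prefix v1 u \<Longrightarrow> prefix u v2 \<Longrightarrow> rk (label T' u) = rk (label T' v1)"
    using DT0' by blast
  note CN = collapse_node[OF nv sv' rs, folded T'_def]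
  have n1: "is_node T' v1" using pT'(1) unfolding is_node_def is_internal_def by auto
  note C1 = CN[OF n1] and C2 = CN[OF pT'(4)]
  have nd: "\<And>u. prefix u v2 \<Longrightarrow> is_node T' u" using pT'(4) node_prefix' by blast
  have main: "strict_prefix (orig_pos v v' v1) (orig_pos v v' v2) \<and>
     (\<forall>u. prefix (orig_pos v v' v1) u \<and> prefix u (orig_pos v v' v2) \<longrightarrow>
        rk (label T u) = rk (label T (orig_pos v v' v1)))"
  proof (cases "prefix v v1")
    case True
    then obtain x1 where x1: "v1 = v @ x1" by (auto simp: prefix_def)
    have "prefix v v2" using True pT'(5) prefix_order.trans[of v v1 v2] by (simp add: strict_prefix_def)
    then obtain x2 where x2: "v2 = v @ x2" by (auto simp: prefix_def)
    have o1: "orig_pos v v' v1 = v' @ x1" and o2: "orig_pos v v' v2 = v' @ x2"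
      using x1 x2 by (auto simp: orig_pos_def)
    have sp: "strict_prefix x1 x2" using pT'(5) x1 x2 by (auto simp: strict_prefix_def)
    show ?thesis unfolding o1 o2
    proof (intro conjI allI impI)
      show "strict_prefix (v' @ x1) (v' @ x2)" using sp by (auto simp: strict_prefix_def)
      fix u assume u: "prefix (v' @ x1) u \<and> prefix u (v' @ x2)"
      then obtain y where y: "u = v' @ y" by (auto simp: prefix_def)
      have "prefix v1 (v @ y)" "prefix (v @ y) v2" using u y x1 x2 by auto
      hence "rk (label T' (v @ y)) = rk (label T' v1)" by (rule DT')
      moreover have "label T' (v @ y) = label T (v' @ y)"
        using CN[OF nd[OF \<open>prefix (v @ y) v2\<close>]] by (simp add: orig_pos_def)
      moreover have "label T' v1 = label T (v' @ x1)" using C1 o1 by simp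
      ultimately show "rk (label T u) = rk (label T (v' @ x1))" using y by simp
    qed
  next
    case False
    hence o1: "orig_pos v v' v1 = v1" by (simp add: orig_pos_def)
    show ?thesis
    proof (cases "prefix v v2")
      case False2: False
      hence o2: "orig_pos v v' v2 = v2" by (simp add: orig_pos_def)
      show ?thesis unfolding o1 o2
      proof (intro conjI allI impI)
        show "strict_prefix v1 v2" by (rule pT'(5))
        fix u assume u: "prefix v1 u \<and> prefix u v2"
        have "\<not> prefix v u" using u False2 prefix_order.trans[of v u v2] by blast
        hence "orig_pos v v' u = u" by (simp add: orig_pos_def)
        hence "label T' u = label T u" using CN[OF nd] u by simp
        moreover have "label T' v1 = label T v1" using C1 o1 by simp
        ultimately show "rk (label T u) = rk (label T v1)" using DT'[of u] u by simp
      qed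
    next
      case True
      then obtain w where w: "v2 = v @ w" by (auto simp: prefix_def)
      have o2: "orig_pos v v' v2 = v' @ w" using w by (simp add: orig_pos_def)
      have "prefix v1 v2" using pT'(5) by (simp add: strict_prefix_def)
      have "prefix v1 v \<or> prefix v v1" using prefix_same_cases[OF \<open>prefix v1 v2\<close> True] .
      with False have v1v: "prefix v1 v" by simp
      have vv': "prefix v v'" using pT(5) by (simp add: strict_prefix_def)
      have l1: "label T' v1 = label T v1" using C1 o1 by simp
      have rkv: "rk (label T v) = rk (label T v1)"
      proof -
        have "rk (label T' v) = rk (label T' v1)" using DT'[of v] v1v True by simp
        moreover have "label T' v = label T v'" using CN[OF nd[OF True]] by (simp add: orig_pos_def)
        ultimately show ?thesis using l1 pT(3) by simp
      qed
      show ?thesis unfolding o1 o2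
      proof (intro conjI allI impI)
        show "strict_prefix v1 (v' @ w)"
        proof -
          have "prefix v1 (v' @ w)" using v1v vv' prefix_order.trans[of v1 v' "v'@w"] by simp
          moreover have "v1 \<noteq> v' @ w" using False vv' prefix_order.trans[of v v' "v'@w"] by auto
          ultimately show ?thesis by (simp add: strict_prefix_def)
        qed
        fix u assume u: "prefix v1 u \<and> prefix u (v' @ w)"
        have "prefix u v' \<or> prefix v' u" using prefix_same_cases[of u "v'@w" v'] u by simp
        thus "rk (label T u) = rk (label T v1)"
        proof
          assume uv': "prefix u v'"
          have "prefix u v \<or> prefix v u" using prefix_same_cases[OF uv' vv'] .
          thus ?thesis
          proof
            assume uv: "prefix u v"
            show ?thesis
            proof (cases "u = v")
              case True then show ?thesis using rkv by simp
            next
              case False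
              hence "\<not> prefix v u" using uv by auto
              hence "orig_pos v v' u = u" by (simp add: orig_pos_def)
              moreover have "prefix u v2" using uv True prefix_order.trans[of u v v2] by blast
              ultimately have "label T' u = label T u" using CN[OF nd] by simp
              thus ?thesis using DT'[of u] u \<open>prefix u v2\<close> l1 by simp
            qed
          next
            assume "prefix v u" thus ?thesis using DT[of u] uv' rkv by simp
          qed
        next
          assume "prefix v' u"
          then obtain y where y: "u = v' @ y" by (auto simp: prefix_def)
          have "prefix (v @ y) v2" using u y w by simp
          have "prefix v1 (v @ y)" using v1v prefix_order.trans[of v1 v "v@y"] by simp
          hence "rk (label T' (v @ y)) = rk (label T' v1)" using DT'[of "v @ y"] \<open>prefix (v @ y) v2\<close> by simp
          moreover have "label T' (v @ y) = label T (v' @ y)"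
            using CN[OF nd[OF \<open>prefix (v @ y) v2\<close>]] by (simp add: orig_pos_def)
          ultimately show ?thesis using y l1 by simp
        qed
      qed
    qed
  qed
  show ?thesis unfolding pump_def direct_desc_def
    using main C1 C2 pT'(1-4) by auto
qed

end
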